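(* Let $K\ge 1$ and $T\ge 2$ be integers and let $a_1,\dots,a_{T-1}$ be binary sequences of period $K$. Define the binary sequences $s=I(1_K,a_1,\dots,a_{T-1})$ and $s'=I(0_K,a_1,\dots,a_{T-1})$ of period $KT$. For $0\le \tau<KT$ write $\tau=\tau_1T+\tau_2$ with $0\le\tau_2\le T-1$. Then $$R_{s'}(\tau)=\begin{cases}R_s(\tau)&\text{if }\tau_2=0,\\ R_s(\tau)-2d(a_{\tau_2})-2d(a_{T-\tau_2})&\text{if }\tau_2\neq 0,\end{cases}$$ $$R_{s,s'}(\tau)=\begin{cases}TK-2K&\text{if }\tau=0,\\ R_s(\tau)-2K&\text{if }\tau_2=0,\ \tau\neq 0,\\ R_s(\tau)-2d(a_{T-\tau_2})&\text{otherwise},\end{cases}\qquad R_{s',s}(\tau)=\begin{cases}TK-2K&\text{if }\tau=0,\\ R_s(\tau)-2K&\text{if }\tau_2=0,\ \tau\neq 0,\\ R_s(\tau)-2d(a_{\tau_2})&\text{otherwise}.\end{cases}$$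
   Context: A binary sequence of period $n$ is a map $\mathbb{Z}\to\{0,1\}$ with period $n$ (indices are taken modulo $n$). For binary sequences $a,b$ of period $n$, the periodic correlation is $R_{a,b}(\tau)=\sum_{t=0}^{n-1}(-1)^{a(t)+b(t+\tau)}$ (with $t+\tau$ taken mod $n$), and $R_a(\tau)=R_{a,a}(\tau)$. For binary sequences $b_0,\dots,b_{T-1}$ of period $K$, the interleaved sequence $I(b_0,\dots,b_{T-1})$ is the binary sequence $v$ of period $KT$ defined by $v(iT+j)=b_j(i)$ for $0\le i\le K-1$, $0\le j\le T-1$. $0_K$ and $1_K$ denote the all-zero and all-one sequences of period $K$. For a binary sequence $a$ of period $K$, $d(a)=2|\{0\le t\le K-1: a(t)=1\}|-K$. *)

theory Defs
  imports Main
begin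

text \<open>A binary sequence of period n is represented as a function nat => bool
  (True = 1, False = 0); only its values at indices mod n are used.\<close>

definition corr :: "nat \<Rightarrow> (nat \<Rightarrow> bool) \<Rightarrow> (nat \<Rightarrow> bool) \<Rightarrow> nat \<Rightarrow> int" where
  "corr n a b \<tau> = (\<Sum>t<n. (-1::int) ^ (of_bool (a (t mod n)) + of_bool (b ((t + \<tau>) mod n))))"

definition acorr :: "nat \<Rightarrow> (nat \<Rightarrow> bool) \<Rightarrow> nat \<Rightarrow> int" where
  "acorr n a \<tau> = corr n a a \<tau>"

text \<open>Interleaved sequence I(b_0,...,b_{T-1}) of period K*T: v(iT+j) = b_j(i).\<close>
definition interleave :: "nat \<Rightarrow> nat \<Rightarrow> (nat \<Rightarrow> nat \<Rightarrow> bool) \<Rightarrow> nat \<Rightarrow> bool" where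
  "interleave K T b v = b ((v mod (K*T)) mod T) (((v mod (K*T)) div T) mod K)"

definition imbalance :: "nat \<Rightarrow> (nat \<Rightarrow> bool) \<Rightarrow> int" where
  "imbalance K a = 2 * int (card {t. t < K \<and> a (t mod K)}) - int K"

end

theory Submission imports Defs begin

definition sg :: "bool \<Rightarrow> int" where "sg b = (if b then -1 else 1)"

lemma corr_alt: "corr n a b \<tau> = (\<Sum>t<n. sg (a (t mod n)) * sg (b ((t+\<tau>) mod n)))"
  unfolding corr_def sg_def by (intro sum.cong) (auto simp: power_add)

lemma interleave_mod: "interleave K T b (x mod (K*T)) = interleave K T b x"
  unfolding interleave_def by simp

lemma interleave_alt: "interleave K T b v = b (v mod T) ((v div T) mod K)"
proof (cases "T = 0")
  case True thus ?thesis unfolding interleave_def by simp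
next
  case False
  have e: "v mod (K*T) = T*((v div T) mod K) + v mod T" using mod_mult2_eq[of v T K] by (simp add: mult.commute)
  show ?thesis unfolding interleave_def e using False by simp
qed

lemma sum_residue:
  fixes h :: "nat \<Rightarrow> int"
  assumes "c < T"
  shows "(\<Sum>t<K*T. of_bool (t mod T = c) * h t) = (\<Sum>i<K. h (i*T + c))"
proof -
  have "(\<Sum>t<K*T. of_bool (t mod T = c) * h t) = (\<Sum>t\<in>{..<K*T} \<inter> {t. t mod T = c}. h t)"
    by simp
  also have "{..<K*T} \<inter> {t. t mod T = c} = (\<lambda>i. i*T+c) ` {..<K}"
  proof (intro equalityI subsetI)
    fix t assume t: "t \<in> {..<K*T} \<inter> {t. t mod T = c}"
    hence "t = (t div T)*T + c" by (metis IntD2 mem_Collect_eq div_mult_mod_eq)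
    moreover have "t div T < K" using t by (simp add: less_mult_imp_div_less)
    ultimately show "t \<in> (\<lambda>i. i*T+c) ` {..<K}" by blast
  next
    fix t assume "t \<in> (\<lambda>i. i*T+c) ` {..<K}"
    then obtain i where i: "i < K" "t = i*T+c" by auto
    have "i*T + c < (i+1)*T" using assms by simp
    also have "\<dots> \<le> K*T" using i by (intro mult_right_mono) auto
    finally show "t \<in> {..<K*T} \<inter> {t. t mod T = c}" using i assms by simp
  qed
  also have "(\<Sum>t\<in>(\<lambda>i. i*T+c) ` {..<K}. h t) = (\<Sum>i<K. h (i*T + c))"
    using assms by (subst sum.reindex) (auto simp: inj_on_def)
  finally show ?thesis .
qed

lemma shift_sum:
  fixes f :: "nat \<Rightarrow> int"
  assumes "0 < K"
  shows "(\<Sum>i<K. f ((i + c) mod K)) = (\<Sum>i<K. f i)"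
proof (rule sum.reindex_bij_witness[of _ "\<lambda>j. (j + (K - c mod K)) mod K" "\<lambda>i. (i+c) mod K"])
  fix i assume "i \<in> {..<K}"
  have "((i + c) mod K + (K - c mod K)) mod K = (i + (c + (K - c mod K))) mod K"
    by (simp add: mod_add_left_eq add.assoc)
  also have "c + (K - c mod K) = K * (c div K + 1)" using assms
  proof -
    have "c mod K < K" using assms by simp
    moreover have "c = K*(c div K) + c mod K" by simp
    ultimately have "c + (K - c mod K) = K*(c div K) + K" by linarith
    thus ?thesis by simp
  qed
  finally show "((i + c) mod K + (K - c mod K)) mod K = i" using \<open>i \<in> {..<K}\<close> by (metis lessThan_iff mod_mult_self2 mod_less)
next
  fix j assume "j \<in> {..<K}"
  have "((j + (K - c mod K)) mod K + c) mod K = (j + (c + (K - c mod K))) mod K"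
    by (metis mod_add_left_eq add.assoc add.commute)
  also have "c + (K - c mod K) = K * (c div K + 1)" using assms
  proof -
    have "c mod K < K" using assms by simp
    moreover have "c = K*(c div K) + c mod K" by simp
    ultimately have "c + (K - c mod K) = K*(c div K) + K" by linarith
    thus ?thesis by simp
  qed
  finally show "((j + (K - c mod K)) mod K + c) mod K = j" using \<open>j \<in> {..<K}\<close> by (metis lessThan_iff mod_mult_self2 mod_less)
qed (use assms in auto)

lemma sum_sg: "(\<Sum>k<K. sg (f k)) = - imbalance K f"
proof -
  have "(\<Sum>k<K. sg (f k)) = (\<Sum>k<K. 1 - 2 * of_bool (f k))" unfolding sg_def by (intro sum.cong) auto
  also have "\<dots> = int K - 2 * int (card ({..<K} \<inter> {k. f k}))" by (simp add: sum_subtractf sum_distrib_left[symmetric])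
  also have "{..<K} \<inter> {k. f k} = {t. t < K \<and> f (t mod K)}" by auto
  finally show ?thesis unfolding imbalance_def by simp
qed


lemma mod_zero_shift:
  assumes "0 < (T::nat)"
  shows "((t + \<tau>) mod T = 0) = (t mod T = (T - \<tau> mod T) mod T)"
proof -
  define x where "x = t mod T"
  define y where "y = \<tau> mod T"
  have x: "x < T" and y: "y < T" using assms by (auto simp: x_def y_def)
  have "(t + \<tau>) mod T = (x + y) mod T" by (simp add: x_def y_def mod_add_eq)
  moreover have "((x + y) mod T = 0) = (x = (T - y) mod T)"
  proof (cases "y = 0")
    case True thus ?thesis using x by simp
  next
    case False
    have "(x + y) mod T = (if x + y < T then x + y else (x + y - T) mod T)" by (rule mod_if)
    moreover have "x + y - T < T" using x y by linarith
    ultimately have "(x + y) mod T = (if x + y < T then x + y else x + y - T)" by simp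
    moreover have "(T - y) mod T = T - y" using False y by simp
    ultimately show ?thesis using False x y by auto
  qed
  ultimately show ?thesis by (simp add: x_def y_def)
qed

theorem theorem2:
  fixes K T :: nat and a :: "nat \<Rightarrow> nat \<Rightarrow> bool" and \<tau> :: nat
  assumes "K \<ge> 1" and "T \<ge> 2" and "\<tau> < K * T"
  defines "s \<equiv> interleave K T (\<lambda>j. if j = 0 then (\<lambda>_. True) else a j)"
      and "s' \<equiv> interleave K T (\<lambda>j. if j = 0 then (\<lambda>_. False) else a j)"
      and "\<tau>2 \<equiv> \<tau> mod T"
  shows "(acorr (K*T) s' \<tau> =
           (if \<tau>2 = 0 then acorr (K*T) s \<tau>
            else acorr (K*T) s \<tau> - 2 * imbalance K (a \<tau>2) - 2 * imbalance K (a (T - \<tau>2))) \<and>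
         corr (K*T) s s' \<tau> =
           (if \<tau> = 0 then int T * int K - 2 * int K
            else if \<tau>2 = 0 then acorr (K*T) s \<tau> - 2 * int K
            else acorr (K*T) s \<tau> - 2 * imbalance K (a (T - \<tau>2))) \<and>
         corr (K*T) s' s \<tau> =
           (if \<tau> = 0 then int T * int K - 2 * int K
            else if \<tau>2 = 0 then acorr (K*T) s \<tau> - 2 * int K
            else acorr (K*T) s \<tau> - 2 * imbalance K (a \<tau>2)))"
proof -
  define N where "N = K * T"
  define S where "S t = sg (s t)" for t
  define E where "E t = (of_bool (t mod T = 0) :: int)" for t
  have T0: "0 < T" and K0: "0 < K" using assms by auto
  have smod: "s (x mod N) = s x" for x unfolding s_def N_def by (rule interleave_mod)
  have s'mod: "s' (x mod N) = s' x" for x unfolding s'_def N_def by (rule interleave_mod)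
  have sv: "s v = (if v mod T = 0 then True else a (v mod T) ((v div T) mod K))" for v
    unfolding s_def interleave_alt by simp
  have s'v: "s' v = (if v mod T = 0 then False else a (v mod T) ((v div T) mod K))" for v
    unfolding s'_def interleave_alt by simp
  have F2: "sg (s' t) = S t + 2 * E t" for t
    unfolding S_def E_def sv s'v sg_def by simp
  define R where "R = (\<Sum>t<N. S t * S (t + \<tau>))"
  define A where "A = (\<Sum>t<N. E t * S (t + \<tau>))"
  define B where "B = (\<Sum>t<N. S t * E (t + \<tau>))"
  define C where "C = (\<Sum>t<N. E t * E (t + \<tau>))"
  have Rdef: "acorr (K*T) s \<tau> = R"
    unfolding acorr_def corr_alt R_def N_def[symmetric] smod S_def ..
  have eq1: "acorr (K*T) s' \<tau> = R + 2*A + 2*B + 4*C"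
  proof -
    have "acorr (K*T) s' \<tau> = (\<Sum>t<N. (S t + 2 * E t) * (S (t+\<tau>) + 2 * E (t+\<tau>)))"
      unfolding acorr_def corr_alt N_def[symmetric] s'mod F2 ..
    also have "\<dots> = (\<Sum>t<N. S t * S (t + \<tau>) + 2 * (E t * S (t + \<tau>)) + 2 * (S t * E (t + \<tau>)) + 4 * (E t * E (t + \<tau>)))"
      by (intro sum.cong) (auto simp: algebra_simps)
    finally show ?thesis unfolding R_def A_def B_def C_def by (simp add: sum.distrib sum_distrib_left)
  qed
  have eq2: "corr (K*T) s s' \<tau> = R + 2*B"
  proof -
    have "corr (K*T) s s' \<tau> = (\<Sum>t<N. S t * (S (t+\<tau>) + 2 * E (t+\<tau>)))"
      unfolding corr_alt N_def[symmetric] s'mod smod F2 S_def ..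
    also have "\<dots> = (\<Sum>t<N. S t * S (t + \<tau>) + 2 * (S t * E (t + \<tau>)))"
      by (intro sum.cong) (auto simp: algebra_simps)
    finally show ?thesis unfolding R_def B_def by (simp add: sum.distrib sum_distrib_left)
  qed
  have eq3: "corr (K*T) s' s \<tau> = R + 2*A"
  proof -
    have "corr (K*T) s' s \<tau> = (\<Sum>t<N. (S t + 2 * E t) * S (t+\<tau>))"
      unfolding corr_alt N_def[symmetric] s'mod smod F2 S_def ..
    also have "\<dots> = (\<Sum>t<N. S t * S (t + \<tau>) + 2 * (E t * S (t + \<tau>)))"
      by (intro sum.cong) (auto simp: algebra_simps)
    finally show ?thesis unfolding R_def A_def by (simp add: sum.distrib sum_distrib_left)
  qed
  have divi: "(i * T + \<tau>) div T = i + \<tau> div T" for i using T0 by simp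
  have modi: "(i * T + \<tau>) mod T = \<tau>2" for i unfolding \<tau>2_def by simp
  have Aval: "A = (if \<tau>2 = 0 then - int K else - imbalance K (a \<tau>2))"
  proof -
    have "A = (\<Sum>i<K. S (i*T + 0 + \<tau>))"
      unfolding A_def N_def E_def using sum_residue[where c=0 and T=T and K=K and h="\<lambda>t. S (t + \<tau>)"] T0 by simp
    also have "\<dots> = (\<Sum>i<K. if \<tau>2 = 0 then -1 else sg (a \<tau>2 ((i + \<tau> div T) mod K)))"
      by (intro sum.cong) (auto simp: S_def sv divi \<tau>2_def add.assoc sg_def)
    also have "\<dots> = (if \<tau>2 = 0 then - int K else - imbalance K (a \<tau>2))"
      using shift_sum[OF K0, where f="\<lambda>k. sg (a \<tau>2 k)" and c="\<tau> div T"] sum_sg[where K=K and f="a \<tau>2"] by simp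
    finally show ?thesis .
  qed
  define c where "c = (T - \<tau>2) mod T"
  have c: "c < T" unfolding c_def using T0 by simp
  have Bval: "B = (if \<tau>2 = 0 then - int K else - imbalance K (a (T - \<tau>2)))"
  proof -
    have "B = (\<Sum>t<K*T. of_bool (t mod T = c) * S t)"
      unfolding B_def N_def E_def c_def \<tau>2_def using mod_zero_shift[OF T0]
      by (intro sum.cong) (auto simp: mult.commute)
    also have "\<dots> = (\<Sum>i<K. S (i*T + c))" using sum_residue[OF c] by simp
    also have "\<dots> = (\<Sum>i<K. if \<tau>2 = 0 then -1 else sg (a (T - \<tau>2) i))"
    proof (intro sum.cong refl)
      fix i assume i: "i \<in> {..<K}"
      have "\<tau>2 < T" unfolding \<tau>2_def using T0 by simp
      hence cc: "c = (if \<tau>2 = 0 then 0 else T - \<tau>2)" unfolding c_def by auto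
      have m: "(i*T + c) mod T = c" and d: "(i*T + c) div T = i" using c T0 by auto
      have "S (i*T + c) = (if c = 0 then -1 else sg (a c i))"
        using i unfolding S_def sv m d by (simp add: sg_def)
      thus "S (i*T + c) = (if \<tau>2 = 0 then -1 else sg (a (T - \<tau>2) i))"
        using \<open>\<tau>2 < T\<close> by (simp add: cc)
    qed
    also have "\<dots> = (if \<tau>2 = 0 then - int K else - imbalance K (a (T - \<tau>2)))"
      using sum_sg[where K=K and f="a (T - \<tau>2)"] by simp
    finally show ?thesis .
  qed
  have Cval: "C = (if \<tau>2 = 0 then int K else 0)"
  proof -
    have "C = (\<Sum>i<K. E (i*T + 0 + \<tau>))"
      unfolding C_def N_def using sum_residue[where c=0 and T=T and K=K and h="\<lambda>t. E (t + \<tau>)"] T0 by (simp add: E_def)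
    also have "\<dots> = (\<Sum>i<K. if \<tau>2 = 0 then 1 else 0)"
      by (intro sum.cong) (auto simp: E_def \<tau>2_def add.assoc)
    finally show ?thesis by simp
  qed
  have R0: "\<tau> = 0 \<Longrightarrow> R = int (K*T)"
  proof -
    assume "\<tau> = 0"
    have "R = (\<Sum>t<N. 1)" unfolding R_def S_def \<open>\<tau> = 0\<close> by (intro sum.cong) (auto simp: sg_def)
    thus ?thesis by (simp add: N_def)
  qed
  have t2: "\<tau> = 0 \<Longrightarrow> \<tau>2 = 0" unfolding \<tau>2_def by simp
  show ?thesis
    unfolding eq1 eq2 eq3 Rdef Aval Bval Cval
    using R0 t2 by auto
qed

end
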